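(* Let $(X,d)$ be a compact metric space, $\Lambda$ a finite nonempty set, and $\mathcal{F}=\{X; f_{\lambda}\mid\lambda\in\Lambda\}$ a parameterized iterated function system such that each $f_\lambda:X\to X$ is continuous and surjective. If $\mathcal{F}$ has the asymptotic average shadowing property, then $\mathcal{F}$ is chain transitive.
   Context: For $\sigma=\{\lambda_0,\lambda_1,\dots\}\in\Lambda^{\mathbb{Z}_+}$ write $\mathcal{F}_{\sigma_n}=f_{\lambda_{n-1}}\circ\cdots\circ f_{\lambda_0}$ ($\mathcal{F}_{\sigma_0}$ the identity). A sequence $\{x_i\}_{i\ge0}$ in $X$ is an asymptotic average pseudo-orbit of $\mathcal{F}$ if there is $\sigma=\{\lambda_0,\lambda_1,\dots\}\in\Lambda^{\mathbb{Z}_+}$ with $\lim_{n\to\infty}\frac1n\sum_{i=0}^{n-1}d(f_{\lambda_i}(x_i),x_{i+1})=0$; it is asymptotically shadowed in average by $z\in X$ if there is $\sigma\in\Lambda^{\mathbb{Z}_+}$ with $\lim_{n\to\infty}\frac1n\sum_{i=0}^{n-1}d(\mathcal{F}_{\sigma_i}(z),x_i)=0$. $\mathcal{F}$ has the asymptotic average shadowing property if every asymptotic average pseudo-orbit is asymptotically shadowed in average by some point of $X$. For $\delta>0$, a $\delta$-chain from $x$ to $y$ is a finite sequence $x=x_0,x_1,\dots,x_b=y$ in $X$ together with $\lambda_0,\dots,\lambda_{b-1}\in\Lambda$ such that $d(f_{\lambda_i}(x_i),x_{i+1})<\delta$ for all $0\le i<b$. $\mathcal{F}$ is chain transitive if for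 all $x,y\in X$ and every $\delta>0$ there is a $\delta$-chain of $\mathcal{F}$ from $x$ to $y$. *)

theory Defs
  imports "HOL-Analysis.Analysis"
begin

primrec iter_comp :: "('b \<Rightarrow> 'a \<Rightarrow> 'a) \<Rightarrow> (nat \<Rightarrow> 'b) \<Rightarrow> nat \<Rightarrow> 'a \<Rightarrow> 'a" where
  "iter_comp f \<sigma> 0 = id"
| "iter_comp f \<sigma> (Suc n) = f (\<sigma> n) \<circ> iter_comp f \<sigma> n"

definition asymp_avg_pseudo_orbit ::
  "'a::metric_space set \<Rightarrow> 'b set \<Rightarrow> ('b \<Rightarrow> 'a \<Rightarrow> 'a) \<Rightarrow> (nat \<Rightarrow> 'a) \<Rightarrow> bool" where
  "asymp_avg_pseudo_orbit X L f x \<longleftrightarrow>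
     (\<forall>i. x i \<in> X) \<and>
     (\<exists>\<sigma>. (\<forall>i. \<sigma> i \<in> L) \<and>
        (\<lambda>n. (\<Sum>i<n. dist (f (\<sigma> i) (x i)) (x (Suc i))) / real n) \<longlonglongrightarrow> 0)"

definition asymp_shadowed_in_avg ::
  "'a::metric_space set \<Rightarrow> 'b set \<Rightarrow> ('b \<Rightarrow> 'a \<Rightarrow> 'a) \<Rightarrow> (nat \<Rightarrow> 'a) \<Rightarrow> 'a \<Rightarrow> bool" where
  "asymp_shadowed_in_avg X L f x z \<longleftrightarrow>
     (\<exists>\<sigma>. (\<forall>i. \<sigma> i \<in> L) \<and>
        (\<lambda>n. (\<Sum>i<n. dist (iter_comp f \<sigma> i z) (x i)) / real n) \<longlonglongrightarrow> 0)"

definition asymp_avg_shadowing ::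
  "'a::metric_space set \<Rightarrow> 'b set \<Rightarrow> ('b \<Rightarrow> 'a \<Rightarrow> 'a) \<Rightarrow> bool" where
  "asymp_avg_shadowing X L f \<longleftrightarrow>
     (\<forall>x. asymp_avg_pseudo_orbit X L f x \<longrightarrow> (\<exists>z\<in>X. asymp_shadowed_in_avg X L f x z))"

definition delta_chain ::
  "'a::metric_space set \<Rightarrow> 'b set \<Rightarrow> ('b \<Rightarrow> 'a \<Rightarrow> 'a) \<Rightarrow> real \<Rightarrow> 'a \<Rightarrow> 'a \<Rightarrow> bool" where
  "delta_chain X L f \<delta> x y \<longleftrightarrow>
     (\<exists>b::nat. \<exists>xs::nat \<Rightarrow> 'a. \<exists>ls::nat \<Rightarrow> 'b.
        xs 0 = x \<and> xs b = y \<and> (\<forall>i\<le>b. xs i \<in> X) \<and>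
        (\<forall>i<b. ls i \<in> L \<and> dist (f (ls i) (xs i)) (xs (Suc i)) < \<delta>))"

definition chain_transitive ::
  "'a::metric_space set \<Rightarrow> 'b set \<Rightarrow> ('b \<Rightarrow> 'a \<Rightarrow> 'a) \<Rightarrow> bool" where
  "chain_transitive X L f \<longleftrightarrow>
     (\<forall>x\<in>X. \<forall>y\<in>X. \<forall>\<delta>>0. delta_chain X L f \<delta> x y)"

end

theory Submission imports Defs "HOL-Library.Discrete_Functions" "HOL-Real_Asymp.Real_Asymp"
begin

definition pseq :: "('a\<Rightarrow>'a) \<Rightarrow> 'a \<Rightarrow> (nat\<Rightarrow>'a) \<Rightarrow> nat \<Rightarrow> 'a" where
 "pseq F x yb n = (if n - 2^floor_log n < 2^(floor_log n - 1) then (F^^(n - 2^floor_log n)) x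
    else yb (2^floor_log n - 1 - (n - 2^floor_log n)))"

lemma floor_log_block: "r < 2^k \<Longrightarrow> floor_log (2^k + r) = k"
  by (rule floor_log_eqI) auto

lemma pseq_B1: "r < 2^(k-1) \<Longrightarrow> pseq F x yb (2^k + r) = (F^^r) x"
proof -
  assume r: "r < 2^(k-1)"
  have "(2::nat)^(k-1) \<le> 2^k" by (rule power_increasing) auto
  with r have "r < 2^k" by linarith
  then have "floor_log (2^k + r) = k" by (rule floor_log_block)
  with r show ?thesis by (simp add: pseq_def)
qed

lemma pseq_B2: "2^(k-1) \<le> r \<Longrightarrow> r < 2^k \<Longrightarrow> pseq F x yb (2^k + r) = yb (2^k - 1 - r)"
proof -
  assume r: "2^(k-1) \<le> r" "r < 2^k"
  then have "floor_log (2^k + r) = k" by (intro floor_log_block) auto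
  with r show ?thesis by (simp add: pseq_def)
qed

lemma pseq_step:
  assumes yb: "\<And>m. F (yb (Suc m)) = yb m"
  shows "Suc i \<noteq> 2^floor_log (Suc i) \<Longrightarrow> Suc i \<noteq> 2^floor_log (Suc i) + 2^(floor_log (Suc i) - 1)
     \<Longrightarrow> pseq F x yb (Suc i) = F (pseq F x yb i)"
proof -
  assume n1: "Suc i \<noteq> 2^floor_log (Suc i)" and n2: "Suc i \<noteq> 2^floor_log (Suc i) + 2^(floor_log (Suc i) - 1)"
  have i0: "i > 0" using n1 by (cases i) auto
  define k where "k = floor_log i"
  define r where "r = i - 2^k"
  have le: "2^k \<le> i" unfolding k_def using floor_log_exp2_le[OF i0] .
  have lt: "i < 2 * 2^k" unfolding k_def using floor_log_exp2_gt[of i] .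
  have ir: "i = 2^k + r" "r < 2^k" using le lt unfolding r_def by auto
  have "Suc r \<noteq> 2^k"
  proof
    assume "Suc r = 2^k"
    then have "Suc i = 2^(Suc k)" using ir by simp
    with n1 show False by (metis floor_log_power)
  qed
  with ir have sr: "Suc r < 2^k" by simp
  have fs: "floor_log (Suc i) = k" using ir sr by (simp add: floor_log_block flip: add_Suc_right)
  have p: "(2::nat)^(k-1) \<le> 2^k" by (rule power_increasing) auto
  consider "Suc r < 2^(k-1)" | "Suc r = 2^(k-1)" | "2^(k-1) \<le> r" by linarith
  then show ?thesis
  proof cases
    case 1
    then show ?thesis using ir pseq_B1[of "Suc r" k F x yb] pseq_B1[of r k F x yb]
      by (simp flip: add_Suc_right)
  next
    case 2
    then have "Suc i = 2^k + 2^(k-1)" using ir by simp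
    with n2 fs show ?thesis by simp
  next
    case 3
    have "pseq F x yb (Suc i) = yb (2^k - 1 - Suc r)"
      using pseq_B2[of k "Suc r" F x yb] 3 sr ir by (simp flip: add_Suc_right)
    moreover have "pseq F x yb i = yb (Suc (2^k - 1 - Suc r))"
      using pseq_B2[of k r F x yb] 3 sr ir by (simp add: Suc_diff_Suc)
    ultimately show ?thesis using yb by simp
  qed
qed

lemma jump_avg:
  fixes d :: "nat \<Rightarrow> real"
  assumes d0: "\<And>i. 0 \<le> d i" and dD: "\<And>i. d i \<le> D"
    and dz: "\<And>i. Suc i \<noteq> 2^floor_log (Suc i) \<Longrightarrow> Suc i \<noteq> 2^floor_log (Suc i) + 2^(floor_log (Suc i) - 1) \<Longrightarrow> d i = 0"
  shows "(\<lambda>n. (\<Sum>i<n. d i) / real n) \<longlonglongrightarrow> 0"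
proof -
  define J where "J = {i. Suc i = 2^floor_log (Suc i) \<or> Suc i = 2^floor_log (Suc i) + 2^(floor_log (Suc i) - 1)}"
  have D0: "0 \<le> D" using d0[of 0] dD[of 0] by linarith
  have bound: "(\<Sum>i<n. d i) \<le> D * (2 * (real (floor_log n) + 1))" for n
  proof -
    have sub: "{..<n} \<inter> J \<subseteq> (\<lambda>m. 2^m - 1) ` {..floor_log n} \<union> (\<lambda>m. 2^m + 2^(m-1) - 1) ` {..floor_log n}"
    proof
      fix i assume "i \<in> {..<n} \<inter> J"
      then have i: "Suc i \<le> n" "i \<in> J" by auto
      have m: "floor_log (Suc i) \<le> floor_log n" using i(1) by (rule floor_log_le_iff)
      from i(2) show "i \<in> (\<lambda>m. 2^m - 1) ` {..floor_log n} \<union> (\<lambda>m. 2^m + 2^(m-1) - 1) ` {..floor_log n}"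
        unfolding J_def
      proof (elim CollectE disjE)
        assume "Suc i = 2^floor_log (Suc i)"
        then have "i = 2^floor_log (Suc i) - 1" by simp
        then show ?thesis using m by blast
      next
        assume "Suc i = 2^floor_log (Suc i) + 2^(floor_log (Suc i) - 1)"
        then have "i = 2^floor_log (Suc i) + 2^(floor_log (Suc i) - 1) - 1" by simp
        then show ?thesis using m by blast
      qed
    qed
    have cardle: "card ({..<n} \<inter> J) \<le> 2 * (floor_log n + 1)"
    proof -
      have "card ({..<n} \<inter> J) \<le> card ((\<lambda>m. (2::nat)^m - 1) ` {..floor_log n} \<union> (\<lambda>m. (2::nat)^m + 2^(m-1) - 1) ` {..floor_log n})"
        by (rule card_mono[OF _ sub]) auto
      also have "\<dots> \<le> card ((\<lambda>m. (2::nat)^m - 1) ` {..floor_log n}) + card ((\<lambda>m. (2::nat)^m + 2^(m-1) - 1) ` {..floor_log n})"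
        by (rule card_Un_le)
      also have "\<dots> \<le> card {..floor_log n} + card {..floor_log n}"
        by (intro add_mono card_image_le) auto
      finally show ?thesis by simp
    qed
    have z: "\<forall>i\<in>{..<n} - {..<n} \<inter> J. d i = 0"
    proof
      fix i assume "i \<in> {..<n} - {..<n} \<inter> J"
      then have "i \<notin> J" by blast
      then show "d i = 0" unfolding J_def by (intro dz) auto
    qed
    have "(\<Sum>i<n. d i) = (\<Sum>i\<in>{..<n} \<inter> J. d i)"
      by (rule sum.mono_neutral_right[OF _ _ z]) auto
    also have "\<dots> \<le> (\<Sum>i\<in>{..<n} \<inter> J. D)" by (rule sum_mono) (rule dD)
    also have "\<dots> = D * real (card ({..<n} \<inter> J))" by simp
    also have "\<dots> \<le> D * (2 * (real (floor_log n) + 1))"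
      using cardle D0 by (intro mult_left_mono) (simp_all, linarith?)
    finally show ?thesis .
  qed
  have lim: "(\<lambda>n::nat. D * (2 * (log 2 (real n) + 1)) / real n) \<longlonglongrightarrow> 0"
    by real_asymp
  show ?thesis
  proof (rule tendsto_sandwich[OF _ _ tendsto_const lim])
    show "\<forall>\<^sub>F n in sequentially. 0 \<le> (\<Sum>i<n. d i) / real n"
      using d0 by (intro always_eventually allI divide_nonneg_nonneg sum_nonneg) auto
    show "\<forall>\<^sub>F n in sequentially. (\<Sum>i<n. d i) / real n \<le> D * (2 * (log 2 (real n) + 1)) / real n"
      using eventually_gt_at_top[of "0::nat"]
    proof eventually_elim
      case (elim n)
      have "real (floor_log n) \<le> log 2 (real n)"
        using elim by (simp add: floor_log_altdef)
      then have "(\<Sum>i<n. d i) \<le> D * (2 * (log 2 (real n) + 1))"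
        using bound[of n] D0 by (smt (verit) mult_left_mono)
      then show ?case using elim by (simp add: divide_right_mono)
    qed
  qed
qed

lemma sum_ge_card:
  fixes e :: "nat \<Rightarrow> real"
  assumes "\<And>i. 0 \<le> e i" "A \<subseteq> {..<n}" "\<And>i. i \<in> A \<Longrightarrow> \<eta> \<le> e i"
  shows "\<eta> * real (card A) \<le> (\<Sum>i<n. e i)"
proof -
  have fA: "finite A" using assms(2) finite_subset by blast
  have "\<eta> * real (card A) = (\<Sum>i\<in>A. \<eta>)" by simp
  also have "\<dots> \<le> (\<Sum>i\<in>A. e i)" using assms(3) by (rule sum_mono)
  also have "\<dots> \<le> (\<Sum>i<n. e i)" using assms(1,2) by (intro sum_mono2) auto
  finally show ?thesis .
qed

lemma good_block:
  fixes e :: "nat \<Rightarrow> real"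
  assumes e0: "\<And>i. 0 \<le> e i" and lim: "(\<lambda>n. (\<Sum>i<n. e i)/real n) \<longlonglongrightarrow> 0" and eta: "\<eta> > 0"
  shows "\<exists>k\<ge>1. (\<exists>i. 2^k \<le> i \<and> i < 2^k + 2^(k-1) \<and> e i < \<eta>) \<and> (\<exists>j. 2^k + 2^(k-1) \<le> j \<and> j < 2^(Suc k) \<and> e j < \<eta>)"
proof -
  have "\<forall>\<^sub>F n in sequentially. (\<Sum>i<n. e i)/real n < \<eta>/4"
    using order_tendstoD(2)[OF lim, of "\<eta>/4"] eta by simp
  then obtain N where N: "\<And>n. n \<ge> N \<Longrightarrow> (\<Sum>i<n. e i)/real n < \<eta>/4"
    unfolding eventually_sequentially by blast
  define k where "k = Suc N"
  have k1: "k \<ge> 1" unfolding k_def by simp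
  have "N < 2^N" by (rule less_exp)
  also have "(2::nat)^N \<le> 2^(Suc k)" by (rule power_increasing) (auto simp: k_def)
  finally have "N \<le> 2^(Suc k)" by simp
  note avg = N[OF this]
  have pk: "(2::nat)^(Suc k) = 4 * 2^(k-1)" "(2::nat)^k = 2 * 2^(k-1)"
    using k1 by (cases k; simp)+
  have contra: False if A: "A \<subseteq> {..<2^(Suc k)}" "card A = 2^(k-1)" "\<And>i. i \<in> A \<Longrightarrow> \<eta> \<le> e i" for A
  proof -
    have "\<eta> * real (2^(k-1)) \<le> (\<Sum>i<2^(Suc k). e i)"
      using sum_ge_card[OF e0 A(1) A(3)] A(2) by simp
    then have "\<eta> / 4 \<le> (\<Sum>i<2^(Suc k). e i) / real (2^(Suc k))"
      by (simp add: pk field_simps)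
    with avg show False by simp
  qed
  have "\<exists>i. 2^k \<le> i \<and> i < 2^k + 2^(k-1) \<and> e i < \<eta>"
  proof (rule ccontr)
    assume "\<not> ?thesis"
    then show False
      by (intro contra[of "{2^k..<2^k + 2^(k-1)}"]) (auto simp: pk not_less)
  qed
  moreover have "\<exists>j. 2^k + 2^(k-1) \<le> j \<and> j < 2^(Suc k) \<and> e j < \<eta>"
  proof (rule ccontr)
    assume "\<not> ?thesis"
    then show False
      by (intro contra[of "{2^k + 2^(k-1)..<2^(Suc k)}"]) (auto simp: pk not_less)
  qed
  ultimately show ?thesis using k1 by blast
qed

lemma finite_modulus:
  fixes P :: "'b \<Rightarrow> real \<Rightarrow> bool"
  assumes "finite L" "\<And>l. l \<in> L \<Longrightarrow> \<exists>\<eta>>0. \<forall>\<eta>'. 0 < \<eta>' \<and> \<eta>' \<le> \<eta> \<longrightarrow> P l \<eta>'"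
  shows "\<exists>\<eta>>0. \<forall>l\<in>L. \<forall>\<eta>'. 0 < \<eta>' \<and> \<eta>' \<le> \<eta> \<longrightarrow> P l \<eta>'"
  using assms
proof (induction L rule: finite_induct)
  case empty
  show ?case by (rule exI[of _ 1]) simp
next
  case (insert a F)
  then obtain \<eta>1 where 1: "\<eta>1 > 0" "\<forall>l\<in>F. \<forall>\<eta>'. 0 < \<eta>' \<and> \<eta>' \<le> \<eta>1 \<longrightarrow> P l \<eta>'" by auto
  obtain \<eta>2 where 2: "\<eta>2 > 0" "\<forall>\<eta>'. 0 < \<eta>' \<and> \<eta>' \<le> \<eta>2 \<longrightarrow> P a \<eta>'" using insert.prems[of a] by blast
  show ?case using 1 2 by (intro exI[of _ "min \<eta>1 \<eta>2"]) auto
qed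

lemma iter_comp_in:
  assumes "\<And>l. l \<in> L \<Longrightarrow> f l ` X = X" "\<And>i. \<sigma> i \<in> L" "z \<in> X"
  shows "iter_comp f \<sigma> n z \<in> X"
  using assms by (induction n) auto

theorem mainTheorem4:
  fixes X :: "'a::metric_space set" and L :: "'b set" and f :: "'b \<Rightarrow> 'a \<Rightarrow> 'a"
  assumes "compact X"
    and "finite L" and "L \<noteq> {}"
    and "\<And>l. l \<in> L \<Longrightarrow> continuous_on X (f l)"
    and "\<And>l. l \<in> L \<Longrightarrow> f l ` X = X"
    and "asymp_avg_shadowing X L f"
  shows "chain_transitive X L f"
  unfolding chain_transitive_def
proof (intro ballI allI impI)
  fix x y and \<delta> :: real
  assume xX: "x \<in> X" and yX: "y \<in> X" and \<delta>: "\<delta> > 0"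
  obtain l0 where l0: "l0 \<in> L" using assms(3) by blast
  define F where "F = f l0"
  have FX: "F ` X = X" unfolding F_def using assms(5)[OF l0] .
  define yb where "yb = rec_nat y (\<lambda>m w. SOME v. v \<in> X \<and> F v = w)"
  have yb_suc: "yb (Suc m) = (SOME v. v \<in> X \<and> F v = yb m)" for m by (simp add: yb_def)
  have yb0: "yb 0 = y" by (simp add: yb_def)
  have ex: "\<exists>v. v \<in> X \<and> F v = w" if "w \<in> X" for w
    using that FX by (metis imageE)
  have ybX: "yb m \<in> X" for m
  proof (induction m)
    case 0 then show ?case using yX yb0 by simp
  next
    case (Suc m) then show ?case unfolding yb_suc using someI_ex[OF ex[OF Suc]] by blast
  qed
  have ybF: "F (yb (Suc m)) = yb m" for m
    unfolding yb_suc using someI_ex[OF ex[OF ybX[of m]]] by blast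
  have FnX: "(F^^r) x \<in> X" for r
    by (induction r) (use xX FX in auto)
  define p where "p = pseq F x yb"
  have pX: "p n \<in> X" for n
    unfolding p_def pseq_def using FnX ybX by simp
  obtain c0 e0 where ce: "\<forall>v\<in>X. dist c0 v \<le> e0"
    using compact_imp_bounded[OF assms(1)] unfolding bounded_def by blast
  define D where "D = 2 * e0"
  have Dd: "dist a b \<le> D" if "a \<in> X" "b \<in> X" for a b
  proof -
    have "dist a b \<le> dist c0 a + dist c0 b" by (metis dist_commute dist_triangle)
    moreover have "dist c0 a \<le> e0" "dist c0 b \<le> e0" using ce that by auto
    ultimately show ?thesis unfolding D_def by linarith
  qed
  have "asymp_avg_pseudo_orbit X L f p"
    unfolding asymp_avg_pseudo_orbit_def
  proof (intro conjI allI exI[of _ "\<lambda>_. l0"])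
    show "p i \<in> X" for i by (rule pX)
    show "(\<lambda>_. l0) i \<in> L" for i using l0 by simp
    show "(\<lambda>n. (\<Sum>i<n. dist (f ((\<lambda>_. l0) i) (p i)) (p (Suc i))) / real n) \<longlonglongrightarrow> 0"
    proof (rule jump_avg)
      show "0 \<le> dist (f l0 (p i)) (p (Suc i))" for i by simp
      show "dist (f l0 (p i)) (p (Suc i)) \<le> D" for i
        using Dd FX pX F_def by blast
      show "dist (f l0 (p i)) (p (Suc i)) = 0"
        if "Suc i \<noteq> 2^floor_log (Suc i)" "Suc i \<noteq> 2^floor_log (Suc i) + 2^(floor_log (Suc i) - 1)" for i
        using pseq_step[of F yb, OF ybF that] unfolding p_def F_def by simp
    qed
  qed
  with assms(6) obtain z \<sigma> where zX: "z \<in> X" and \<sigma>L: "\<And>i. \<sigma> i \<in> L"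
    and sh: "(\<lambda>n. (\<Sum>i<n. dist (iter_comp f \<sigma> i z) (p i)) / real n) \<longlonglongrightarrow> 0"
    unfolding asymp_avg_shadowing_def asymp_shadowed_in_avg_def by blast
  define G where "G s = iter_comp f \<sigma> s z" for s
  have GX: "G s \<in> X" for s unfolding G_def using iter_comp_in[OF assms(5) \<sigma>L zX] .
  have GS: "G (Suc s) = f (\<sigma> s) (G s)" for s unfolding G_def by simp
  have "\<exists>\<eta>>0. \<forall>l\<in>L. \<forall>\<eta>'. 0 < \<eta>' \<and> \<eta>' \<le> \<eta> \<longrightarrow> (\<forall>u\<in>X. \<forall>v\<in>X. dist u v < \<eta>' \<longrightarrow> dist (f l u) (f l v) < \<delta>/2)"
  proof (rule finite_modulus[OF assms(2)])
    fix l assume l: "l \<in> L"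
    have "uniformly_continuous_on X (f l)"
      by (rule compact_uniformly_continuous[OF assms(4)[OF l] assms(1)])
    then obtain d where d: "d > 0" "\<forall>u\<in>X. \<forall>v\<in>X. dist v u < d \<longrightarrow> dist (f l v) (f l u) < \<delta>/2"
      unfolding uniformly_continuous_on_def using \<delta> by (meson half_gt_zero)
    show "\<exists>\<eta>>0. \<forall>\<eta>'. 0 < \<eta>' \<and> \<eta>' \<le> \<eta> \<longrightarrow> (\<forall>u\<in>X. \<forall>v\<in>X. dist u v < \<eta>' \<longrightarrow> dist (f l u) (f l v) < \<delta>/2)"
      using d by (intro exI[of _ d]) auto
  qed
  then obtain \<eta>0 where \<eta>0: "\<eta>0 > 0" "\<forall>l\<in>L. \<forall>\<eta>'. 0 < \<eta>' \<and> \<eta>' \<le> \<eta>0 \<longrightarrow> (\<forall>u\<in>X. \<forall>v\<in>X. dist u v < \<eta>' \<longrightarrow> dist (f l u) (f l v) < \<delta>/2)"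
    by blast
  define \<eta> where "\<eta> = min \<eta>0 (\<delta>/2)"
  have \<eta>pos: "\<eta> > 0" using \<eta>0 \<delta> unfolding \<eta>_def by simp
  have uc: "dist (f l u) (f l v) < \<delta>/2" if "l \<in> L" "u \<in> X" "v \<in> X" "dist u v < \<eta>" for l u v
    using \<eta>0(2) that \<eta>pos unfolding \<eta>_def by auto
  obtain k i j where k1: "k \<ge> 1" and i: "2^k \<le> i" "i < 2^k + 2^(k-1)" "dist (G i) (p i) < \<eta>"
    and j: "2^k + 2^(k-1) \<le> j" "j < 2^(Suc k)" "dist (G j) (p j) < \<eta>"
    using good_block[of "\<lambda>i. dist (G i) (p i)", OF _ sh[folded G_def] \<eta>pos] by auto
  have pk: "(2::nat)^k = 2 * 2^(k-1)" using k1 by (cases k) auto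
  define a where "a = (2::nat)^k"
  define b where "b = (2::nat)^k - 1"
  define c where "c s = (if s \<le> i \<or> j \<le> s then p s else G s)" for s
  define xs where "xs t = c (a + t)" for t
  define ls where "ls t = (if i \<le> a + t \<and> a + t < j then \<sigma> (a + t) else l0)" for t
  have cX: "c s \<in> X" for s unfolding c_def using pX GX by simp
  show "delta_chain X L f \<delta> x y"
    unfolding delta_chain_def
  proof (intro exI[of _ b] exI[of _ xs] exI[of _ ls] conjI allI impI)
    have "xs 0 = p (2^k + 0)" unfolding xs_def c_def a_def using i by simp
    also have "\<dots> = x" unfolding p_def by (subst pseq_B1) simp_all
    finally show "xs 0 = x" .
    have jb: "j \<le> 2^k + (2^k - 1)" using j(2) pk by simp
    have "xs b = p (2^k + (2^k - 1))" unfolding xs_def a_def b_def c_def using jb by simp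
    also have "\<dots> = y" unfolding p_def using pk yb0 by (subst pseq_B2) simp_all
    finally show "xs b = y" .
    show "xs t \<in> X" for t unfolding xs_def by (rule cX)
    fix t assume tb: "t < b"
    define s where "s = a + t"
    have ls_in: "ls t \<in> L" unfolding ls_def using l0 \<sigma>L by simp
    then show "ls t \<in> L" .
    have sb: "Suc s < 2^(Suc k)" unfolding s_def a_def using tb b_def pk by simp
    have dist_s: "dist (f (ls t) (xs t)) (xs (Suc t)) < \<delta>"
    proof -
      consider "s < i" | "j \<le> s" | "i \<le> s" "s < j" by linarith
      then show ?thesis
      proof cases
        case 1
        define r where "r = s - 2^k"
        have sr: "s = 2^k + r" unfolding r_def s_def a_def by simp
        have r1: "Suc r < 2^(k-1)" using 1 i sr by simp
        have "xs t = p s" "xs (Suc t) = p (Suc s)" "ls t = l0"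
          using 1 unfolding xs_def c_def ls_def s_def by auto
        moreover have "p (Suc s) = F (p s)"
          unfolding p_def sr using pseq_B1[of "Suc r" k F x yb] pseq_B1[of r k F x yb] r1
          by (simp flip: add_Suc_right)
        ultimately show ?thesis using \<delta> F_def by simp
      next
        case 2
        define r where "r = s - 2^k"
        have sr: "s = 2^k + r" unfolding r_def s_def a_def by simp
        have r1: "2^(k-1) \<le> r" "Suc r < 2^k" using 2 j sr sb pk by simp_all
        have "xs t = p s" "xs (Suc t) = p (Suc s)" "ls t = l0"
          using 2 unfolding xs_def c_def ls_def s_def by auto
        moreover have "p (Suc s) = F (p s)"
        proof -
          have "p (Suc s) = yb (2^k - 1 - Suc r)"
            unfolding p_def sr using pseq_B2[of k "Suc r" F x yb] r1 by (simp flip: add_Suc_right)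
          moreover have "p s = yb (Suc (2^k - 1 - Suc r))"
            unfolding p_def sr using pseq_B2[of k r F x yb] r1 by (simp add: Suc_diff_Suc)
          ultimately show ?thesis using ybF by simp
        qed
        ultimately show ?thesis using \<delta> F_def by simp
      next
        case 3
        have lt: "ls t = \<sigma> s" using 3 unfolding ls_def s_def by simp
        have xt: "xs t = c s" unfolding xs_def s_def by simp
        have close: "dist (c s) (G s) < \<eta>"
        proof (cases "s = i")
          case True then show ?thesis using i(3) unfolding c_def by (simp add: dist_commute)
        next
          case False then show ?thesis using 3 \<eta>pos unfolding c_def by simp
        qed
        have fc: "dist (f (\<sigma> s) (c s)) (G (Suc s)) < \<delta>/2"
          unfolding GS using uc[OF \<sigma>L cX GX close] .
        show ?thesis
        proof (cases "Suc s = j")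
          case True
          have "xs (Suc t) = p j" using True unfolding xs_def c_def s_def by simp
          have "dist (f (\<sigma> s) (c s)) (p j) \<le> dist (f (\<sigma> s) (c s)) (G j) + dist (G j) (p j)"
            by (rule dist_triangle)
          also have "\<dots> < \<delta>/2 + \<eta>" using fc True j(3) by simp
          also have "\<dots> \<le> \<delta>" unfolding \<eta>_def by simp
          finally show ?thesis using lt xt \<open>xs (Suc t) = p j\<close> by simp
        next
          case False
          have "xs (Suc t) = G (Suc s)" using False 3 unfolding xs_def c_def s_def by auto
          moreover have "dist (f (\<sigma> s) (c s)) (G (Suc s)) < \<delta>" using fc \<delta> by linarith
          ultimately show ?thesis using lt xt by simp
        qed
      qed
    qed
    then show "dist (f (ls t) (xs t)) (xs (Suc t)) < \<delta>" .
  qed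
qed

end
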